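(* There is an absolute constant $c_3>0$ such that the following holds. Let $Q\in\mathbb{N}$, $\mathcal{S}\subseteq B(0,Q^{1/2})\cap(\mathbb{Z}[i]\setminus\{0\})$, $\Delta>0$, $\tau=\Delta^{-1/4}$. Let $b,r\in\mathbb{Z}[i]$ with $(b,r)=1$ and $0<|r|\le\tau$, and let $z\in\mathbb{C}$ with $\Delta^{1/2}\le|z|<\frac{2}{|r|\tau}$. Let $\overline{b}\in\mathbb{Z}[i]$ satisfy $\overline{b}b\equiv1\bmod r$. Then $$P\Big(\frac{b}{r}+z\Big)\le 16+c_3\sum_{t\mid r}\ \sum_{\substack{m\in\mathbb{Z}[i],\ 0<|m|\le\frac{3|rz|\sqrt{Q}}{|t|}\\ (m,\frac{r}{t})=1}}A_t\Big(\frac{\sqrt{Q\Delta}}{|z||t|},\frac{r}{t},-\overline{b}m\Big).$$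
   Context: $\mathbb{Z}[i]$ are the Gaussian integers; $B(y,u)=\{w\in\mathbb{C}:|w-y|\le u\}$. The sum over $t\mid r$ runs over a maximal set of mutually non-associate divisors $t$ of $r$ in $\mathbb{Z}[i]$. For $\alpha\in\mathbb{C}$, $$P(\alpha)=\Big|\Big\{(a,q)\in\mathbb{Z}[i]\times\mathcal{S}:\ (a,q)=1,\ \Big|\frac{a}{q}-\alpha\Big|\le\Delta^{1/2}\Big\}\Big|.$$ For $t\in\mathbb{Z}[i]\setminus\{0\}$, $\mathcal{S}_t=\{q\in\mathbb{Z}[i]:tq\in\mathcal{S}\}$, and for $u\ge0$, $k\in\mathbb{Z}[i]\setminus\{0\}$, $l\in\mathbb{Z}[i]$, $$A_t(u,k,l)=\sup_{y\in\mathbb{C},\ |y|\le\sqrt{Q}/|t|}\big|\{q\in\mathcal{S}_t\cap B(y,u):\ q\equiv l\bmod k\}\big|.$$ *)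

theory Defs
  imports "HOL-Analysis.Analysis"
begin

definition gauss :: "complex set" where
  "gauss = {z. Re z \<in> \<int> \<and> Im z \<in> \<int>}"

definition gdvd :: "complex \<Rightarrow> complex \<Rightarrow> bool" where
  "gdvd a b \<longleftrightarrow> a \<in> gauss \<and> b \<in> gauss \<and> (\<exists>c\<in>gauss. b = a * c)"

definition gassoc :: "complex \<Rightarrow> complex \<Rightarrow> bool" where
  "gassoc a b \<longleftrightarrow> gdvd a b \<and> gdvd b a"

definition gcoprime :: "complex \<Rightarrow> complex \<Rightarrow> bool" where
  "gcoprime a b \<longleftrightarrow> (\<forall>d. gdvd d a \<and> gdvd d b \<longrightarrow> gdvd d 1)"

definition gcong :: "complex \<Rightarrow> complex \<Rightarrow> complex \<Rightarrow> bool" where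
  "gcong a b m \<longleftrightarrow> gdvd m (a - b)"

definition divisor_reps :: "complex set \<Rightarrow> complex \<Rightarrow> bool" where
  "divisor_reps T r \<longleftrightarrow>
     T \<subseteq> {t. gdvd t r} \<and>
     (\<forall>t1\<in>T. \<forall>t2\<in>T. gassoc t1 t2 \<longrightarrow> t1 = t2) \<and>
     (\<forall>d. gdvd d r \<longrightarrow> (\<exists>t\<in>T. gassoc d t))"

definition Pcount :: "complex set \<Rightarrow> real \<Rightarrow> complex \<Rightarrow> nat" where
  "Pcount S \<Delta> \<alpha> = card {(a, q). a \<in> gauss \<and> q \<in> S \<and> gcoprime a q \<and>
                                  norm (a / q - \<alpha>) \<le> sqrt \<Delta>}"

definition S_t :: "complex set \<Rightarrow> complex \<Rightarrow> complex set" where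
  "S_t S t = {q \<in> gauss. t * q \<in> S}"

definition A_t :: "complex set \<Rightarrow> nat \<Rightarrow> complex \<Rightarrow> real \<Rightarrow> complex \<Rightarrow> complex \<Rightarrow> real" where
  "A_t S Q t u k l = (SUP y\<in>{y::complex. norm y \<le> sqrt (real Q) / norm t}.
       real (card {q \<in> S_t S t \<inter> cball y u. gcong q l k}))"

end

theory Submission imports Defs begin

lemma gauss_iff: "z \<in> gauss \<longleftrightarrow> Re z \<in> \<int> \<and> Im z \<in> \<int>" by (simp add: gauss_def)

lemma gauss_add[intro]: "a \<in> gauss \<Longrightarrow> b \<in> gauss \<Longrightarrow> a + b \<in> gauss"
  by (simp add: gauss_def)
lemma gauss_diff[intro]: "a \<in> gauss \<Longrightarrow> b \<in> gauss \<Longrightarrow> a - b \<in> gauss"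
  by (simp add: gauss_def)
lemma gauss_minus[intro]: "a \<in> gauss \<Longrightarrow> - a \<in> gauss"
  by (simp add: gauss_def)
lemma gauss_mult[intro]: "a \<in> gauss \<Longrightarrow> b \<in> gauss \<Longrightarrow> a * b \<in> gauss"
  by (simp add: gauss_def)
lemma gauss_0[simp,intro]: "0 \<in> gauss" by (simp add: gauss_def)
lemma gauss_1[simp,intro]: "1 \<in> gauss" by (simp add: gauss_def)

lemma gauss_norm_ge1: assumes "a \<in> gauss" "a \<noteq> 0" shows "norm a \<ge> 1"
proof -
  obtain x y where x: "Re a = of_int x" and y: "Im a = of_int y"
    using assms(1) unfolding gauss_def by (auto elim!: Ints_cases)
  have "x \<noteq> 0 \<or> y \<noteq> 0" using assms(2) x y by (metis complex_eqI of_int_0 zero_complex.simps)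
  hence "x^2 + y^2 \<noteq> 0" by simp
  moreover have "x^2 + y^2 \<ge> 0" by simp
  ultimately have "x^2 + y^2 \<ge> 1" by linarith
  hence "(real_of_int x)^2 + (real_of_int y)^2 \<ge> 1" by (metis of_int_add of_int_le_iff of_int_1 of_int_power)
  hence "(norm a)^2 \<ge> 1" using x y by (simp add: cmod_power2)
  thus ?thesis by (metis abs_norm_cancel one_le_power abs_le_square_iff abs_one power_one)
qed

lemma gauss_box: assumes "w \<in> gauss" "norm w \<le> R"
  shows "w \<in> (\<lambda>(x,y). Complex (of_int x) (of_int y)) ` ({-ceiling R..ceiling R} \<times> {-ceiling R..ceiling R})"
proof -
  obtain x where x: "Re w = of_int x" using assms(1) unfolding gauss_def by (auto elim!: Ints_cases)
  obtain y where y: "Im w = of_int y" using assms(1) unfolding gauss_def by (auto elim!: Ints_cases)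
  have "\<bar>Re w\<bar> \<le> R" using abs_Re_le_cmod assms(2) by (rule order_trans)
  moreover have "real_of_int \<bar>x\<bar> = \<bar>Re w\<bar>" using x by simp
  moreover have "R \<le> of_int (ceiling R)" by simp
  ultimately have "real_of_int \<bar>x\<bar> \<le> of_int (ceiling R)" by linarith
  hence hx: "\<bar>x\<bar> \<le> ceiling R" by (simp only: of_int_le_iff)
  have "\<bar>Im w\<bar> \<le> R" using abs_Im_le_cmod assms(2) by (rule order_trans)
  moreover have "real_of_int \<bar>y\<bar> = \<bar>Im w\<bar>" using y by simp
  moreover have "R \<le> of_int (ceiling R)" by simp
  ultimately have "real_of_int \<bar>y\<bar> \<le> of_int (ceiling R)" by linarith
  hence hy: "\<bar>y\<bar> \<le> ceiling R" by (simp only: of_int_le_iff)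
  have we: "w = Complex (of_int x) (of_int y)" using x y by (simp add: complex_eq_iff)
  have "(x, y) \<in> {-ceiling R..ceiling R} \<times> {-ceiling R..ceiling R}" using hx hy by auto
  thus ?thesis using we by (intro image_eqI[where x="(x,y)"]) simp_all
qed

lemma gauss_finite_ball: "finite (gauss \<inter> cball 0 R)"
proof -
  have "gauss \<inter> cball 0 R \<subseteq> (\<lambda>(x,y). Complex (of_int x) (of_int y)) ` ({-ceiling R..ceiling R} \<times> {-ceiling R..ceiling R})"
    using gauss_box by auto
  thus ?thesis by (rule finite_subset) auto
qed

lemma gauss_card_unit_ball: "card (gauss \<inter> cball 0 1) \<le> 9"
proof -
  have "gauss \<inter> cball 0 1 \<subseteq> (\<lambda>(x,y). Complex (of_int x) (of_int y)) ` ({-ceiling (1::real)..ceiling 1} \<times> {-ceiling (1::real)..ceiling 1})"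
    using gauss_box[of _ 1] by auto
  hence "gauss \<inter> cball 0 1 \<subseteq> (\<lambda>(x,y). Complex (of_int x) (of_int y)) ` ({-1..1::int} \<times> {-1..1::int})"
    by simp
  hence "card (gauss \<inter> cball 0 1) \<le> card ((\<lambda>(x,y). Complex (of_int x) (of_int y)) ` ({-1..1::int} \<times> {-1..1::int}))"
    by (intro card_mono) auto
  also have "\<dots> \<le> card ({-1..1::int} \<times> {-1..1::int})" by (intro card_image_le) simp
  also have "card ({-1..1::int} \<times> {-1..1::int}) = 9" by (simp add: card_cartesian_product)
  finally show ?thesis by simp
qed

lemma gauss_div: assumes "g \<in> gauss" "a \<in> gauss" "g \<noteq> 0"
  shows "\<exists>k\<in>gauss. norm (a - g * k) < norm g"
proof -
  define w where "w = a / g"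
  define k where "k = Complex (of_int (round (Re w))) (of_int (round (Im w)))"
  have k: "k \<in> gauss" by (simp add: k_def gauss_def)
  have d1: "\<bar>Re (w - k)\<bar> \<le> 1/2" unfolding k_def using of_int_round_abs_le[of "Re w"] by (simp add: abs_minus_commute)
  have d2: "\<bar>Im (w - k)\<bar> \<le> 1/2" unfolding k_def using of_int_round_abs_le[of "Im w"] by (simp add: abs_minus_commute)
  have e1: "(Re (w-k))^2 \<le> (1/2)^2" using d1 abs_le_square_iff[of "Re (w-k)" "1/2"] by simp
  have e2: "(Im (w-k))^2 \<le> (1/2)^2" using d2 abs_le_square_iff[of "Im (w-k)" "1/2"] by simp
  have "(norm (w - k))^2 = (Re (w-k))^2 + (Im (w-k))^2" by (simp add: cmod_power2)
  also have "\<dots> < 1" using e1 e2 by (simp add: power2_eq_square)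
  finally have "(norm (w-k))^2 < 1^2" by simp
  hence lt: "norm (w - k) < 1" using power2_less_imp_less by fastforce
  have "a - g * k = g * (w - k)" using assms(3) by (simp add: w_def algebra_simps)
  hence "norm (a - g*k) = norm g * norm (w - k)" by (simp add: norm_mult)
  also have "\<dots> < norm g" using lt assms(3) by simp
  finally show ?thesis using k by blast
qed

lemma gdvd_refl: "a \<in> gauss \<Longrightarrow> gdvd a a"
  unfolding gdvd_def by (rule conjI, assumption, rule conjI, assumption, rule bexI[where x=1]) auto
lemma gdvd_trans: assumes "gdvd a b" "gdvd b c" shows "gdvd a c"
proof -
  obtain x where x: "x \<in> gauss" "b = a * x" "a \<in> gauss" using assms(1) unfolding gdvd_def by blast
  obtain y where y: "y \<in> gauss" "c = b * y" "c \<in> gauss" using assms(2) unfolding gdvd_def by blast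
  have "c = a * (x * y)" using x y by (simp add: mult.assoc)
  thus ?thesis unfolding gdvd_def using x y gauss_mult by blast
qed
lemma gdvd_add: assumes "gdvd d a" "gdvd d b" shows "gdvd d (a + b)"
proof -
  obtain x where x: "x \<in> gauss" "a = d * x" "a \<in> gauss" "d \<in> gauss" using assms(1) unfolding gdvd_def by blast
  obtain y where y: "y \<in> gauss" "b = d * y" "b \<in> gauss" using assms(2) unfolding gdvd_def by blast
  have "a + b = d * (x + y)" using x y by (simp add: distrib_left)
  thus ?thesis unfolding gdvd_def using x y gauss_add by blast
qed
lemma gdvd_diff: assumes "gdvd d a" "gdvd d b" shows "gdvd d (a - b)"
proof -
  obtain x where x: "x \<in> gauss" "a = d * x" "a \<in> gauss" "d \<in> gauss" using assms(1) unfolding gdvd_def by blast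
  obtain y where y: "y \<in> gauss" "b = d * y" "b \<in> gauss" using assms(2) unfolding gdvd_def by blast
  have "a - b = d * (x - y)" using x y by (simp add: right_diff_distrib)
  thus ?thesis unfolding gdvd_def using x y gauss_diff by blast
qed
lemma gdvd_multr: assumes "gdvd d a" "c \<in> gauss" shows "gdvd d (c * a)"
proof -
  obtain x where x: "x \<in> gauss" "a = d * x" "a \<in> gauss" "d \<in> gauss" using assms(1) unfolding gdvd_def by blast
  have "c * a = d * (c * x)" using x by simp
  thus ?thesis unfolding gdvd_def using x assms(2) gauss_mult by blast
qed
lemma gdvd_mult_self: "d \<in> gauss \<Longrightarrow> c \<in> gauss \<Longrightarrow> gdvd d (d * c)"
  unfolding gdvd_def by auto

definition gn :: "complex \<Rightarrow> nat" where "gn w = nat (floor ((norm w)^2))"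

lemma gn_eq: assumes "w \<in> gauss" shows "real (gn w) = (norm w)^2"
proof -
  have "(norm w)^2 = (Re w)^2 + (Im w)^2" by (simp add: cmod_power2)
  also have "\<dots> \<in> \<int>" using assms unfolding gauss_def by auto
  finally have i: "(norm w)^2 \<in> \<int>" .
  then obtain n where n: "(norm w)^2 = of_int n" by (auto elim: Ints_cases)
  have "real_of_int n \<ge> 0" using n by (metis zero_le_power2)
  hence "n \<ge> 0" by simp
  thus ?thesis unfolding gn_def n by simp
qed

lemma gn_less: assumes "v \<in> gauss" "w \<in> gauss" "norm v < norm w" shows "gn v < gn w"
proof -
  have "(norm v)^2 < (norm w)^2" using assms(3) by (simp add: power_strict_mono)
  hence "real (gn v) < real (gn w)" using gn_eq assms by simp
  thus ?thesis by simp
qed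

lemma bezout: assumes a: "a \<in> gauss" and b: "b \<in> gauss" and b0: "b \<noteq> 0"
  shows "\<exists>g x y. g \<in> gauss \<and> x \<in> gauss \<and> y \<in> gauss \<and> g = x * a + y * b \<and> g \<noteq> 0 \<and> gdvd g a \<and> gdvd g b"
proof -
  define P where "P w \<longleftrightarrow> w \<noteq> 0 \<and> (\<exists>x\<in>gauss. \<exists>y\<in>gauss. w = x * a + y * b)" for w
  have "P b" unfolding P_def using b0 by (metis gauss_0 gauss_1 mult_1 mult_zero_left add.left_neutral)
  then obtain g where g: "P g" and gmin: "\<And>w. P w \<Longrightarrow> gn g \<le> gn w"
    using ex_has_least_nat[of P b gn] by blast
  obtain x y where x: "x \<in> gauss" and y: "y \<in> gauss" and gxy: "g = x * a + y * b" and g0: "g \<noteq> 0"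
    using g unfolding P_def by blast
  have gg: "g \<in> gauss" using gxy x y a b by auto
  have dv: "gdvd g c" if c: "c \<in> gauss" and cI: "\<exists>u\<in>gauss. \<exists>v\<in>gauss. c = u * a + v * b" for c
  proof -
    obtain u v where u: "u \<in> gauss" and v: "v \<in> gauss" and cuv: "c = u * a + v * b" using cI by blast
    obtain k where k: "k \<in> gauss" and lt: "norm (c - g * k) < norm g" using gauss_div[OF gg c g0] by blast
    have e: "c - g * k = (u - k * x) * a + (v - k * y) * b" using cuv gxy by (simp add: algebra_simps)
    have "\<not> P (c - g * k)"
    proof
      assume "P (c - g * k)"
      hence "gn g \<le> gn (c - g * k)" by (rule gmin)
      moreover have "gn (c - g * k) < gn g" using gn_less[OF _ gg lt] c gg k by auto
      ultimately show False by simp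
    qed
    hence "c - g * k = 0" unfolding P_def using e u v k x y by blast
    hence "c = g * k" by simp
    thus ?thesis unfolding gdvd_def using gg c k by blast
  qed
  have "a = 1 * a + 0 * b" by simp
  hence "gdvd g a" using dv[OF a] by blast
  moreover have "b = 0 * a + 1 * b" by simp
  hence "gdvd g b" using dv[OF b] by blast
  ultimately show ?thesis using gg x y gxy g0 by blast
qed

lemma coprime_bezout: assumes "a \<in> gauss" "b \<in> gauss" "b \<noteq> 0" "gcoprime a b"
  shows "\<exists>x\<in>gauss. \<exists>y\<in>gauss. x * a + y * b = 1"
proof -
  obtain g x y where g: "g \<in> gauss" "x \<in> gauss" "y \<in> gauss" "g = x * a + y * b" "gdvd g a" "gdvd g b"
    using bezout[OF assms(1-3)] by blast
  have "gdvd g 1" using assms(4) g unfolding gcoprime_def by blast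
  then obtain c where c: "c \<in> gauss" "1 = g * c" unfolding gdvd_def by blast
  have "(c * x) * a + (c * y) * b = 1" using c g by (simp add: algebra_simps)
  thus ?thesis using c g by blast
qed

lemma bezout_coprime: assumes "x \<in> gauss" "y \<in> gauss" "x * a + y * b = 1"
  shows "gcoprime a b"
  unfolding gcoprime_def
proof (intro allI impI)
  fix d assume "gdvd d a \<and> gdvd d b"
  hence "gdvd d (x * a + y * b)" using assms by (intro gdvd_add gdvd_multr) auto
  thus "gdvd d 1" using assms by simp
qed

lemma euclid: assumes "gdvd d (b * q)" "gcoprime b r" "gdvd d r" "b \<in> gauss" "r \<in> gauss" "r \<noteq> 0" "q \<in> gauss"
  shows "gdvd d q"
proof -
  obtain x y where xy: "x \<in> gauss" "y \<in> gauss" "x * b + y * r = 1" using coprime_bezout assms by blast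
  have "q = (x * b + y * r) * q" using xy by simp
  hence qe: "q = x * (b * q) + (y * q) * r" by (simp add: algebra_simps)
  have h1: "gdvd d (x * (b * q))" by (rule gdvd_multr[OF assms(1) xy(1)])
  have h2: "gdvd d ((y * q) * r)" by (rule gdvd_multr[OF assms(3)]) (use xy assms gauss_mult in auto)
  from h1 h2 have "gdvd d (x * (b * q) + (y * q) * r)" by (rule gdvd_add)
  thus ?thesis using qe by simp
qed


lemma gdvd_quot: assumes "gdvd t a" "t \<noteq> 0" shows "a / t \<in> gauss" "a = t * (a / t)"
proof -
  obtain c where c: "c \<in> gauss" "a = t * c" using assms(1) unfolding gdvd_def by blast
  have "a / t = c" using c(2) assms(2) by simp
  thus "a / t \<in> gauss" "a = t * (a / t)" using c by auto
qed

lemma unit_pairs: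
  assumes a: "a \<in> gauss" and q: "q \<in> gauss" "q \<noteq> 0" and caq: "gcoprime a q"
    and b: "b \<in> gauss" and r: "r \<in> gauss" "r \<noteq> 0" and cbr: "gcoprime b r"
    and e: "a * r = b * q"
  shows "(a, q) \<in> (\<lambda>u. (u * b, u * r)) ` (gauss \<inter> cball 0 1)"
proof -
  obtain x y where xy: "x \<in> gauss" "y \<in> gauss" "x * a + y * q = 1" using coprime_bezout[OF a q caq] by blast
  obtain x' y' where xy': "x' \<in> gauss" "y' \<in> gauss" "x' * b + y' * r = 1" using coprime_bezout[OF b r cbr] by blast
  define c1 where "c1 = x * b + y * r"
  define c2 where "c2 = x' * a + y' * q"
  have c1g: "c1 \<in> gauss" unfolding c1_def using xy b r by auto
  have c2g: "c2 \<in> gauss" unfolding c2_def using xy' a q by auto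
  have "r = (x * a + y * q) * r" using xy by simp
  also have "\<dots> = x * (a * r) + y * q * r" by (simp add: algebra_simps)
  also have "\<dots> = x * (b * q) + y * q * r" by (simp only: e)
  also have "\<dots> = q * c1" unfolding c1_def by (simp add: algebra_simps)
  finally have r1: "r = q * c1" .
  have "q = (x' * b + y' * r) * q" using xy' by simp
  also have "\<dots> = x' * (b * q) + y' * r * q" by (simp add: algebra_simps)
  also have "\<dots> = x' * (a * r) + y' * r * q" by (simp only: e)
  also have "\<dots> = r * c2" unfolding c2_def by (simp add: algebra_simps)
  finally have q1: "q = r * c2" .
  have "r * 1 = r * (c2 * c1)" using r1 q1 by (simp add: algebra_simps)
  hence p: "c2 * c1 = 1" using r(2) by simp
  hence "c1 \<noteq> 0" "c2 \<noteq> 0" by auto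
  hence n1: "norm c1 \<ge> 1" "norm c2 \<ge> 1" using gauss_norm_ge1 c1g c2g by auto
  have "norm (c2 * c1) = 1" using p by simp
  hence nn: "norm c2 * norm c1 = 1" by (simp only: norm_mult)
  have "norm c2 * 1 \<le> norm c2 * norm c1" by (rule mult_left_mono) (use n1 in auto)
  hence "norm c2 \<le> 1" using nn by simp
  hence uc: "c2 \<in> gauss \<inter> cball 0 1" using c2g by simp
  have "a * r = b * (r * c2)" using e q1 by simp
  hence "a * r = (c2 * b) * r" by (simp add: algebra_simps)
  hence "a = c2 * b" using r(2) by simp
  moreover have "q = c2 * r" using q1 by simp
  ultimately show ?thesis using uc by auto
qed

theorem lemma3:
  shows "\<exists>c3::real. c3 > 0 \<and>
    (\<forall>(Q::nat) (S::complex set) (\<Delta>::real) (b::complex) (r::complex) (z::complex)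
        (bbar::complex) (T::complex set).
      S \<subseteq> cball 0 (sqrt (real Q)) \<inter> (gauss - {0}) \<longrightarrow>
      \<Delta> > 0 \<longrightarrow>
      b \<in> gauss \<longrightarrow> r \<in> gauss \<longrightarrow> gcoprime b r \<longrightarrow>
      0 < norm r \<longrightarrow> norm r \<le> \<Delta> powr (-1/4) \<longrightarrow>
      sqrt \<Delta> \<le> norm z \<longrightarrow> norm z < 2 / (norm r * \<Delta> powr (-1/4)) \<longrightarrow>
      bbar \<in> gauss \<longrightarrow> gcong (bbar * b) 1 r \<longrightarrow>
      divisor_reps T r \<longrightarrow>
      real (Pcount S \<Delta> (b / r + z)) \<le>
        16 + c3 * (\<Sum>t\<in>T. \<Sum>m\<in>{m\<in>gauss. 0 < norm m \<and>
                      norm m \<le> 3 * norm (r * z) * sqrt (real Q) / norm t \<and>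
                      gcoprime m (r / t)}.
                 A_t S Q t (sqrt (real Q * \<Delta>) / (norm z * norm t)) (r / t) (- bbar * m)))"
proof (intro exI[where x=1] conjI allI impI)
  show "(1::real) > 0" by simp
  fix Q :: nat and S :: "complex set" and \<Delta> :: real and b r z bbar :: complex and T :: "complex set"
  assume SQ: "S \<subseteq> cball 0 (sqrt (real Q)) \<inter> (gauss - {0})" and D: "\<Delta> > 0"
    and b: "b \<in> gauss" and r: "r \<in> gauss" and cbr: "gcoprime b r" and r0: "0 < norm r"
    and rtau: "norm r \<le> \<Delta> powr (-1/4)" and z1: "sqrt \<Delta> \<le> norm z"
    and z2: "norm z < 2 / (norm r * \<Delta> powr (-1/4))"
    and bb: "bbar \<in> gauss" and bbc: "gcong (bbar * b) 1 r" and Trep: "divisor_reps T r"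
  define \<alpha> where "\<alpha> = b / r + z"
  define R where "R t = sqrt (real Q) / norm t" for t :: complex
  define u where "u t = sqrt (real Q * \<Delta>) / (norm z * norm t)" for t :: complex
  define M where "M t = {m\<in>gauss. 0 < norm m \<and>
                      norm m \<le> 3 * norm (r * z) * sqrt (real Q) / norm t \<and>
                      gcoprime m (r / t)}" for t
  define cp where "cp t m = closest_point (cball 0 (R t)) (m / (z * r))" for t m
  define C where "C t m = {q \<in> S_t S t \<inter> cball (cp t m) (u t). gcong q (-bbar*m) (r/t)}" for t m
  define F where "F p = ((fst p * fst (snd p) + b * (fst p * snd (snd p))) / r, fst p * snd (snd p))" for p :: "complex \<times> complex \<times> complex"
  define Pset where "Pset = {(a, q). a \<in> gauss \<and> q \<in> S \<and> gcoprime a q \<and> norm (a / q - \<alpha>) \<le> sqrt \<Delta>}"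
  define P0 where "P0 = {p\<in>Pset. fst p * r = b * snd p}"
  define P1 where "P1 = Pset - P0"
  have rn0: "r \<noteq> 0" using r0 by auto
  have z0: "z \<noteq> 0" using z1 D by auto
  have "S \<subseteq> gauss \<inter> cball 0 (sqrt (real Q))" using SQ by auto
  hence finS: "finite S" using gauss_finite_ball by (rule finite_subset)
  have Tprops: "t \<in> gauss \<and> t \<noteq> 0 \<and> gdvd t r \<and> r / t \<in> gauss \<and> r = t * (r / t)" if "t \<in> T" for t
  proof -
    have d: "gdvd t r" using Trep that unfolding divisor_reps_def by auto
    hence t0: "t \<noteq> 0" using rn0 unfolding gdvd_def by auto
    show ?thesis using d t0 gdvd_quot[OF d t0] unfolding gdvd_def by auto
  qed
  have finT: "finite T"
  proof -
    have "T \<subseteq> gauss \<inter> cball 0 (norm r)"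
    proof
      fix t assume t: "t \<in> T"
      have tp: "t \<in> gauss" "t \<noteq> 0" "r / t \<in> gauss" "r = t * (r / t)" using Tprops[OF t] by auto
      have "r / t \<noteq> 0" using rn0 tp by auto
      hence "norm (r / t) \<ge> 1" using gauss_norm_ge1 tp by auto
      hence "norm t * 1 \<le> norm t * norm (r / t)" by (intro mult_left_mono) auto
      also have "\<dots> = norm r" using tp(4) by (metis norm_mult)
      finally show "t \<in> gauss \<inter> cball 0 (norm r)" using tp by simp
    qed
    thus ?thesis using gauss_finite_ball by (rule finite_subset)
  qed
  have St_sub: "S_t S t \<subseteq> gauss \<inter> cball 0 (R t)" if "t \<in> T" for t
  proof
    fix q assume q: "q \<in> S_t S t"
    have tp: "t \<in> gauss" "t \<noteq> 0" using Tprops[OF that] by auto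
    have "norm (t * q) \<le> sqrt (real Q)" using q SQ unfolding S_t_def by auto
    hence "norm t * norm q \<le> sqrt (real Q)" by (simp add: norm_mult)
    hence "norm q \<le> sqrt (real Q) / norm t" using tp by (simp add: field_simps)
    thus "q \<in> gauss \<inter> cball 0 (R t)" using q unfolding S_t_def R_def by auto
  qed
  have finSt: "finite (S_t S t)" if "t \<in> T" for t
    using St_sub[OF that] gauss_finite_ball by (rule finite_subset)
  have finC: "finite (C t m)" if "t \<in> T" for t m
    using finSt[OF that] unfolding C_def by (rule finite_subset[rotated]) auto
  have finM: "finite (M t)" for t
    using gauss_finite_ball[of "3 * norm (r * z) * sqrt (real Q) / norm t"]
    by (rule finite_subset[rotated]) (auto simp: M_def)
  have Rnn: "R t \<ge> 0" for t unfolding R_def by simp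
  have cardC: "real (card (C t m)) \<le> A_t S Q t (u t) (r / t) (- bbar * m)" if "t \<in> T" for t m
  proof -
    have cpin: "cp t m \<in> {y::complex. norm y \<le> sqrt (real Q) / norm t}"
      using closest_point_in_set[of "cball 0 (R t)" "m / (z * r)"] Rnn[of t]
      unfolding cp_def R_def by auto
    have bdd: "bdd_above ((\<lambda>y. real (card {q \<in> S_t S t \<inter> cball y (u t). gcong q (-bbar*m) (r/t)}))
                 ` {y::complex. norm y \<le> sqrt (real Q) / norm t})"
      by (rule bdd_aboveI[where M="real (card (S_t S t))"])
         (auto intro!: card_mono finSt[OF that])
    show ?thesis unfolding A_t_def C_def u_def
      by (rule cSUP_upper[OF cpin bdd[unfolded u_def]])
  qed
  have P0card: "card P0 \<le> 9"
  proof -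
    have "P0 \<subseteq> (\<lambda>u. (u * b, u * r)) ` (gauss \<inter> cball 0 1)"
    proof
      fix p assume p: "p \<in> P0"
      obtain a q where pq: "p = (a, q)" by (cases p)
      have "a \<in> gauss" "q \<in> S" "gcoprime a q" "a * r = b * q"
        using p pq unfolding P0_def Pset_def by auto
      moreover hence "q \<in> gauss" "q \<noteq> 0" using SQ by auto
      ultimately show "p \<in> (\<lambda>u. (u * b, u * r)) ` (gauss \<inter> cball 0 1)"
        using unit_pairs[of a q b r] b r rn0 cbr pq by auto
    qed
    hence "card P0 \<le> card ((\<lambda>u. (u * b, u * r)) ` (gauss \<inter> cball 0 1))"
      by (intro card_mono finite_imageI gauss_finite_ball)
    also have "\<dots> \<le> card (gauss \<inter> cball 0 1)" by (rule card_image_le[OF gauss_finite_ball])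
    also have "\<dots> \<le> 9" by (rule gauss_card_unit_ball)
    finally show ?thesis .
  qed
  define Sig where "Sig = Sigma T (\<lambda>t. Sigma (M t) (C t))"
  have finSig: "finite Sig" unfolding Sig_def using finT finM finC
    by (intro finite_SigmaI) auto
  have P1sub: "P1 \<subseteq> F ` Sig"
  proof
    fix p assume p: "p \<in> P1"
    obtain a q where pq: "p = (a, q)" by (cases p)
    have a: "a \<in> gauss" and qS: "q \<in> S" and caq: "gcoprime a q" and close: "norm (a / q - \<alpha>) \<le> sqrt \<Delta>"
      and ne: "a * r \<noteq> b * q"
      using p pq unfolding P1_def P0_def Pset_def by auto
    have q: "q \<in> gauss" "q \<noteq> 0" "norm q \<le> sqrt (real Q)" using qS SQ by auto
    obtain g x y where g: "g \<in> gauss" "x \<in> gauss" "y \<in> gauss" "g = x * q + y * r" "g \<noteq> 0" "gdvd g q" "gdvd g r"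
      using bezout[OF q(1) r rn0] by blast
    obtain t where tT: "t \<in> T" and gt: "gassoc g t" using Trep g(7) unfolding divisor_reps_def by blast
    have tp: "t \<in> gauss" "t \<noteq> 0" "gdvd t r" "r / t \<in> gauss" "r = t * (r / t)" using Tprops[OF tT] by auto
    obtain e' where e': "e' \<in> gauss" "t = g * e'" using gt unfolding gassoc_def gdvd_def by blast
    have tq: "gdvd t q" using gt g(6) unfolding gassoc_def by (blast intro: gdvd_trans)
    define q' where "q' = q / t"
    define r' where "r' = r / t"
    define m where "m = a * r - b * q"
    define m' where "m' = m / t"
    have q'g: "q' \<in> gauss" and qq': "q = t * q'" using gdvd_quot[OF tq tp(2)] unfolding q'_def by auto
    have r'g: "r' \<in> gauss" and rr': "r = t * r'" using tp unfolding r'_def by auto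
    have tm: "gdvd t m" unfolding m_def using tp(3) tq a b by (intro gdvd_diff gdvd_multr)
    have m'g: "m' \<in> gauss" and mm': "m = t * m'" using gdvd_quot[OF tm tp(2)] unfolding m'_def by auto
    have m0: "m \<noteq> 0" using ne unfolding m_def by simp
    have m'0: "m' \<noteq> 0" using m0 mm' by auto
    have "t * m' = t * (a * r' - b * q')" using mm' rr' qq' unfolding m_def by (simp add: algebra_simps)
    hence m'e: "m' = a * r' - b * q'" using tp(2) by simp
    have cqr: "gcoprime q' r'"
    proof (rule bezout_coprime[of "x * e'" "y * e'"])
      show "x * e' \<in> gauss" "y * e' \<in> gauss" using g e' by auto
      have "t * ((x * e') * q' + (y * e') * r') = t * 1"
        using e' g(4) qq' rr' by (simp add: algebra_simps)
      thus "(x * e') * q' + (y * e') * r' = 1" using tp(2) by simp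
    qed
    have cmr: "gcoprime m' (r / t)"
      unfolding gcoprime_def r'_def[symmetric]
    proof (intro allI impI)
      fix d assume d: "gdvd d m' \<and> gdvd d r'"
      have "gdvd d (a * r' - m')" using d a by (intro gdvd_diff gdvd_multr) auto
      hence dbq: "gdvd d (b * q')" using m'e by simp
      have r'r: "gdvd r' r" unfolding gdvd_def using r'g r tp rr' by (auto simp: mult.commute)
      have "gdvd d r" using d r'r by (blast intro: gdvd_trans)
      hence "gdvd d q'" using euclid[OF dbq cbr _ b r rn0 q'g] by blast
      thus "gdvd d 1" using d cqr unfolding gcoprime_def by blast
    qed
    have key: "a / q - \<alpha> = m / (q * r) - z" unfolding \<alpha>_def m_def using q(2) rn0
      by (simp add: field_simps)
    have close2: "norm (m / (q * r) - z) \<le> sqrt \<Delta>" using close key by simp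
    have "norm (m / (q * r)) \<le> norm (m / (q * r) - z) + norm z" using norm_triangle_sub[of "m / (q * r)" z] by simp
    also have "\<dots> \<le> 2 * norm z" using close2 z1 by simp
    finally have mq: "norm m / (norm q * norm r) \<le> 2 * norm z" by (simp add: norm_mult norm_divide)
    hence "norm m \<le> 2 * norm z * (norm q * norm r)" using q(2) rn0 by (simp add: field_simps)
    also have "\<dots> \<le> 2 * norm z * (sqrt (real Q) * norm r)"
      using q(3) by (intro mult_left_mono mult_right_mono) auto
    also have "\<dots> \<le> 3 * norm (r * z) * sqrt (real Q)" by (simp add: norm_mult)
    finally have mb: "norm m \<le> 3 * norm (r * z) * sqrt (real Q)" .
    have m'M: "m' \<in> M t"
    proof -
      have "norm m' = norm m / norm t" unfolding m'_def by (simp add: norm_divide)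
      hence "norm m' \<le> 3 * norm (r * z) * sqrt (real Q) / norm t"
        using mb tp(2) by (simp add: divide_right_mono)
      thus ?thesis unfolding M_def using m'g m'0 cmr by auto
    qed
    have q'St: "q' \<in> S_t S t" unfolding S_t_def using q'g qq' qS by auto
    have q'K: "q' \<in> cball 0 (R t)" using St_sub[OF tT] q'St by auto
    have "dist (cp t m') q' = dist (closest_point (cball 0 (R t)) (m' / (z * r))) (closest_point (cball 0 (R t)) q')"
      unfolding cp_def using closest_point_self[OF q'K] by simp
    also have "\<dots> \<le> dist (m' / (z * r)) q'"
      by (rule closest_point_lipschitz) (use Rnn[of t] in auto)
    also have "m' / (z * r) - q' = (q / z) * (m / (q * r) - z) / t"
      unfolding m'_def q'_def using q(2) rn0 z0 tp(2) by (simp add: field_simps)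
    hence "dist (m' / (z * r)) q' = norm q / norm z * norm (m / (q * r) - z) / norm t"
      by (simp add: dist_norm norm_mult norm_divide)
    also have "\<dots> \<le> sqrt (real Q) / norm z * sqrt \<Delta> / norm t"
      using q(3) close2 by (intro divide_right_mono mult_mono divide_right_mono) auto
    also have "\<dots> = u t" unfolding u_def by (simp add: real_sqrt_mult)
    finally have dq: "dist (cp t m') q' \<le> u t" .
    have cg: "gcong q' (-bbar * m') (r / t)"
    proof -
      obtain k where k: "k \<in> gauss" "bbar * b - 1 = r * k" using bbc unfolding gcong_def gdvd_def by blast
      have "q' - (-bbar * m') = r' * (bbar * a - t * k * q')"
      proof -
        have bb1: "bbar * b = 1 + t * r' * k"
        proof -
          have "bbar * b = (bbar * b - 1) + 1" by simp
          also have "\<dots> = 1 + t * r' * k" using k(2) rr' by simp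
          finally show ?thesis .
        qed
        have "q' - (-bbar * m') = q' + bbar * (a * r' - b * q')" using m'e by simp
        also have "\<dots> = q' + bbar * a * r' - (bbar * b) * q'" by (simp add: algebra_simps)
        also have "\<dots> = q' + bbar * a * r' - (1 + t * r' * k) * q'" by (simp only: bb1)
        also have "\<dots> = r' * (bbar * a - t * k * q')" by (simp add: algebra_simps)
        finally show ?thesis .
      qed
      moreover have "bbar * a - t * k * q' \<in> gauss" using bb a tp k q'g by auto
      ultimately show ?thesis unfolding gcong_def gdvd_def r'_def[symmetric]
        using r'g q'g m'g bb by auto
    qed
    have q'C: "q' \<in> C t m'" unfolding C_def using q'St dq cg by auto
    have "F (t, m', q') = (a, q)"
    proof -
      have "t * m' + b * (t * q') = a * r" using mm' qq' unfolding m_def by (simp add: algebra_simps)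
      thus ?thesis unfolding F_def using qq' rn0 by simp
    qed
    moreover have "(t, m', q') \<in> Sig" unfolding Sig_def using tT m'M q'C by auto
    ultimately show "p \<in> F ` Sig" using pq by (intro image_eqI[where x="(t, m', q')"]) auto
  qed
  have c1: "card Pset \<le> card P0 + card P1"
  proof -
    have "Pset = P0 \<union> P1" unfolding P1_def P0_def by auto
    thus ?thesis using card_Un_le[of P0 P1] by simp
  qed
  have c2: "card P1 \<le> card (F ` Sig)" using P1sub finSig by (intro card_mono) auto
  have c3: "card (F ` Sig) \<le> card Sig" using finSig by (rule card_image_le)
  have c4: "card Sig = (\<Sum>t\<in>T. \<Sum>m\<in>M t. card (C t m))"
    unfolding Sig_def using finT finM finC by (simp add: card_SigmaI)
  have c5: "card Pset \<le> 9 + (\<Sum>t\<in>T. \<Sum>m\<in>M t. card (C t m))"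
    using c1 c2 c3 c4 P0card by linarith
  have c6: "real (card Pset) \<le> 9 + (\<Sum>t\<in>T. \<Sum>m\<in>M t. real (card (C t m)))"
  proof -
    have "real (card Pset) \<le> real (9 + (\<Sum>t\<in>T. \<Sum>m\<in>M t. card (C t m)))"
      using c5 by (simp only: of_nat_le_iff)
    thus ?thesis by (simp only: of_nat_add of_nat_sum of_nat_numeral)
  qed
  have c7: "(\<Sum>t\<in>T. \<Sum>m\<in>M t. real (card (C t m))) \<le> (\<Sum>t\<in>T. \<Sum>m\<in>M t. A_t S Q t (u t) (r / t) (- bbar * m))"
    using cardC by (intro sum_mono) auto
  have fin: "real (card Pset) \<le> 16 + 1 * (\<Sum>t\<in>T. \<Sum>m\<in>M t. A_t S Q t (u t) (r / t) (- bbar * m))"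
    using c6 c7 by linarith
  have e1: "Pcount S \<Delta> (b / r + z) = card Pset"
    unfolding Pcount_def Pset_def \<alpha>_def by (rule refl)
  show "real (Pcount S \<Delta> (b / r + z)) \<le>
        16 + 1 * (\<Sum>t\<in>T. \<Sum>m\<in>{m\<in>gauss. 0 < norm m \<and>
                      norm m \<le> 3 * norm (r * z) * sqrt (real Q) / norm t \<and>
                      gcoprime m (r / t)}.
                 A_t S Q t (sqrt (real Q * \<Delta>) / (norm z * norm t)) (r / t) (- bbar * m))"
    unfolding e1 using fin unfolding M_def u_def .
qed

end
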